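(* Let $\mathcal{G}=(\mathcal{V},\mathcal{E})$ be a finite graph which is join-irreducible, and let $$R(\mathcal{G})=\{x\in[0,1]^{\mathcal{V}}:\ \mathfrak{K}_{\mathcal{G}'}(x|_{\mathcal{G}'})>0\text{ for every induced subgraph }\mathcal{G}'\subseteq\mathcal{G}\}.$$ Then at every point $x\in\partial R(\mathcal{G})\cap(0,\infty)^{\mathcal{V}}$ the partial derivatives $\partial_j\mathfrak{K}_{\mathcal{G}}(x)$, $j\in\mathcal{V}$, are nonzero, and hence $\partial R(\mathcal{G})\cap(0,\infty)^{\mathcal{V}}$ is a smooth submanifold of $(0,\infty)^{\mathcal{V}}$.
   Context: Graphs are finite, simple and undirected. A clique is a set of pairwise adjacent vertices (the empty set is a clique). An induced subgraph $\mathcal{G}'$ has vertex set $\mathcal{V}'\subseteq\mathcal{V}$ and all edges of $\mathcal{G}$ between vertices of $\mathcal{V}'$; $x|_{\mathcal{G}'}=(x_v)_{v\in\mathcal{V}'}$. $\mathfrak{K}_{\mathcal{G}}(x)=\sum_{\mathcal{K}\subseteq\mathcal{V}\text{ clique}}(-1)^{|\mathcal{K}|}\prod_{v\in\mathcal{K}}x_v$, the empty clique contributing $1$. The graph join $\mathcal{G}_1+\mathcal{G}_2$ of graphs with disjoint vertex sets has vertex set $\mathcal{V}_1\sqcup\mathcal{V}_2$, two vertices being adjacent iff they are adjacent in the same $\mathcal{G}_i$ or lie in different $\mathcal{G}_i$. A graph is join-irreducible if it cannot be written as the join of two nonempty graphs. *)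

theory Defs
  imports "HOL-Analysis.Analysis"
begin

text \<open>A finite simple graph is modelled on a finite vertex type 'a (vertex set = UNIV)
with a symmetric irreflexive adjacency relation E. Points of R^V are functions 'a => real,
carrying the product (= Euclidean) topology.\<close>

definition simple_graph :: "('a \<Rightarrow> 'a \<Rightarrow> bool) \<Rightarrow> bool" where
  "simple_graph E \<longleftrightarrow> (\<forall>u v. E u v \<longrightarrow> E v u) \<and> (\<forall>v. \<not> E v v)"

definition is_clique :: "('a \<Rightarrow> 'a \<Rightarrow> bool) \<Rightarrow> 'a set \<Rightarrow> bool" where
  "is_clique E K \<longleftrightarrow> (\<forall>u\<in>K. \<forall>v\<in>K. u \<noteq> v \<longrightarrow> E u v)"

text \<open>Clique polynomial of the induced subgraph on vertex set S, evaluated at x restricted to S.\<close>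
definition clique_poly :: "('a \<Rightarrow> 'a \<Rightarrow> bool) \<Rightarrow> 'a set \<Rightarrow> ('a \<Rightarrow> real) \<Rightarrow> real" where
  "clique_poly E S x = (\<Sum>K\<in>{K. K \<subseteq> S \<and> is_clique E K}. (-1) ^ card K * (\<Prod>v\<in>K. x v))"

text \<open>G (on vertex set UNIV) is a join of two nonempty graphs iff UNIV splits into two
nonempty disjoint parts with all cross pairs adjacent.\<close>
definition join_irreducible :: "('a \<Rightarrow> 'a \<Rightarrow> bool) \<Rightarrow> bool" where
  "join_irreducible E \<longleftrightarrow>
     \<not> (\<exists>A B. A \<noteq> {} \<and> B \<noteq> {} \<and> A \<inter> B = {} \<and> A \<union> B = UNIV \<and> (\<forall>a\<in>A. \<forall>b\<in>B. E a b))"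

definition R_set :: "('a \<Rightarrow> 'a \<Rightarrow> bool) \<Rightarrow> ('a \<Rightarrow> real) set" where
  "R_set E = {x. (\<forall>v. 0 \<le> x v \<and> x v \<le> 1) \<and> (\<forall>S. clique_poly E S x > 0)}"

end

theory Submission
  imports Defs
begin

lemma clique_poly_cong:
  assumes "\<forall>v\<in>S. y v = z v"
  shows "clique_poly E S y = clique_poly E S z"
  unfolding clique_poly_def
proof (rule sum.cong[OF refl])
  fix K assume "K \<in> {K. K \<subseteq> S \<and> is_clique E K}"
  then have "K \<subseteq> S" by auto
  then show "(-1) ^ card K * (\<Prod>v\<in>K. y v) = (-1) ^ card K * (\<Prod>v\<in>K. z v)"
    using assms by (metis prod.cong subsetD)
qed

lemma clique_poly_insert:
  fixes E :: "'a::finite \<Rightarrow> 'a \<Rightarrow> bool"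
  assumes sg: "simple_graph E" and vS: "v \<notin> S"
  shows "clique_poly E (insert v S) y = clique_poly E S y - y v * clique_poly E (S \<inter> {u. E v u}) y"
proof -
  let ?f = "\<lambda>K. (-1::real) ^ card K * (\<Prod>v\<in>K. y v)"
  define A where "A = {K. K \<subseteq> S \<and> is_clique E K}"
  define C where "C = {K. K \<subseteq> S \<inter> {u. E v u} \<and> is_clique E K}"
  define B where "B = insert v ` C"
  have sym: "\<And>a b. E a b \<Longrightarrow> E b a" and irr: "\<And>a. \<not> E a a"
    using sg unfolding simple_graph_def by auto
  have split: "{K. K \<subseteq> insert v S \<and> is_clique E K} = A \<union> B"
  proof (rule set_eqI, rule iffI)
    fix K assume K: "K \<in> {K. K \<subseteq> insert v S \<and> is_clique E K}"
    show "K \<in> A \<union> B"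
    proof (cases "v \<in> K")
      case False then show ?thesis using K vS unfolding A_def by auto
    next
      case True
      have "K - {v} \<in> C" using K True unfolding C_def is_clique_def by auto
      moreover have "K = insert v (K - {v})" using True by auto
      ultimately show ?thesis unfolding B_def by blast
    qed
  next
    fix K assume "K \<in> A \<union> B"
    then show "K \<in> {K. K \<subseteq> insert v S \<and> is_clique E K}"
      unfolding A_def B_def C_def is_clique_def using sym by auto
  qed
  have disj: "A \<inter> B = {}" using vS unfolding A_def B_def by auto
  have inj: "inj_on (insert v) C"
  proof (rule inj_onI)
    fix K L assume "K \<in> C" "L \<in> C" "insert v K = insert v L"
    moreover have "v \<notin> K" "v \<notin> L" using \<open>K \<in> C\<close> \<open>L \<in> C\<close> irr unfolding C_def by auto
    ultimately show "K = L" by (simp add: insert_ident)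
  qed
  have "sum ?f B = sum (?f \<circ> insert v) C"
    unfolding B_def using inj by (rule sum.reindex)
  also have "\<dots> = sum (\<lambda>K. - y v * ?f K) C"
  proof (rule sum.cong[OF refl])
    fix K assume "K \<in> C"
    then have "v \<notin> K" unfolding C_def using irr by auto
    then show "(?f \<circ> insert v) K = - y v * ?f K" by simp
  qed
  also have "\<dots> = - y v * clique_poly E (S \<inter> {u. E v u}) y"
    unfolding clique_poly_def C_def by (simp add: sum_distrib_left)
  finally have "sum ?f B = - y v * clique_poly E (S \<inter> {u. E v u}) y" .
  moreover have "clique_poly E (insert v S) y = sum ?f A + sum ?f B"
    unfolding clique_poly_def split by (rule sum.union_disjoint) (auto simp: disj)
  moreover have "sum ?f A = clique_poly E S y" unfolding clique_poly_def A_def ..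
  ultimately show ?thesis by simp
qed

lemma clique_poly_empty: "clique_poly E {} y = 1"
proof -
  have "{K. K \<subseteq> {} \<and> is_clique E K} = {{}}" by (auto simp: is_clique_def)
  then show ?thesis unfolding clique_poly_def by simp
qed

lemma cont_clique_poly: "continuous_on UNIV (clique_poly E S)"
proof -
  have "continuous_on UNIV (\<lambda>x::'a \<Rightarrow> real. \<Sum>K\<in>{K. K \<subseteq> S \<and> is_clique E K}. (-1) ^ card K * (\<Prod>v\<in>K. x v))"
    by (intro continuous_intros continuous_on_product_coordinates)
  then show ?thesis unfolding clique_poly_def[abs_def] .
qed

lemma closure_nonneg:
  assumes "x \<in> closure (R_set E)"
  shows "clique_poly E S x \<ge> 0"
proof -
  have cl: "closed {x. clique_poly E S x \<ge> 0}"
    using cont_clique_poly[of E S] by (intro closed_Collect_le) (auto intro: continuous_intros)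
  have "R_set E \<subseteq> {x. clique_poly E S x \<ge> 0}"
    unfolding R_set_def by (auto intro: less_imp_le)
  then have "closure (R_set E) \<subseteq> {x. clique_poly E S x \<ge> 0}"
    using cl by (rule closure_minimal)
  then show ?thesis using assms by auto
qed

lemma proper_pos:
  fixes E :: "'a::finite \<Rightarrow> 'a \<Rightarrow> bool"
  assumes sg: "simple_graph E" and ji: "join_irreducible E"
    and nn: "\<And>S. clique_poly E S x \<ge> 0" and pos: "\<forall>v. x v > 0"
  shows "S \<noteq> UNIV \<Longrightarrow> clique_poly E S x > 0"
proof -
  have "finite S" by simp
  then show "S \<noteq> UNIV \<Longrightarrow> clique_poly E S x > 0"
proof (induction S rule: finite_psubset_induct)
  case (psubset S)
  show ?case
  proof (rule ccontr)
    assume "\<not> clique_poly E S x > 0"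
    then have z: "clique_poly E S x = 0" using nn[of S] by simp
    have ne: "S \<noteq> {}" using z clique_poly_empty[of E x] by auto
    have "\<not> (\<forall>a\<in>S. \<forall>b\<in>UNIV - S. E a b)"
      using ji ne psubset.prems unfolding join_irreducible_def
      by (metis Diff_disjoint Diff_eq_empty_iff Un_Diff_cancel Un_UNIV_right top.extremum_unique)
    then obtain a b where a: "a \<in> S" and b: "b \<notin> S" and nab: "\<not> E a b" by auto
    have sym: "\<And>a b. E a b \<Longrightarrow> E b a" using sg unfolding simple_graph_def by auto
    have sub: "S \<inter> {u. E b u} \<subset> S" using a nab sym by auto
    have "S \<inter> {u. E b u} \<noteq> UNIV" using sub by auto
    then have p: "clique_poly E (S \<inter> {u. E b u}) x > 0" using psubset.IH[OF sub] by blast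
    have "clique_poly E (insert b S) x = - x b * clique_poly E (S \<inter> {u. E b u}) x"
      using clique_poly_insert[OF sg b] z by simp
    also have "\<dots> < 0" using p pos by (simp add: mult_pos_pos)
    finally show False using nn[of "insert b S"] by simp
  qed
qed
qed

theorem proposition4p6:
  fixes E :: "'a::finite \<Rightarrow> 'a \<Rightarrow> bool" and x :: "'a \<Rightarrow> real"
  assumes "simple_graph E"
    and "join_irreducible E"
    and "x \<in> frontier (R_set E)"
    and "\<forall>v. x v > 0"
  shows "\<forall>j. deriv (\<lambda>t. clique_poly E UNIV (x(j := t))) (x j) \<noteq> 0"
proof
  fix j
  have sg: "simple_graph E" by fact
  have xc: "x \<in> closure (R_set E)" using assms(3) unfolding frontier_def by (rule DiffD1)
  have nn: "\<And>S. clique_poly E S x \<ge> 0"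
    using xc by (rule closure_nonneg)
  define N where "N = (UNIV - {j}) \<inter> {u. E j u}"
  have NU: "N \<noteq> UNIV" unfolding N_def by auto
  have p: "clique_poly E N x > 0"
    by (rule proper_pos[OF sg assms(2) nn assms(4) NU])
  define a where "a = clique_poly E (UNIV - {j}) x"
  define b where "b = clique_poly E N x"
  have U: "UNIV = insert j (UNIV - {j})" by auto
  have eq: "clique_poly E UNIV (x(j := t)) = a - t * b" for t
  proof -
    have "clique_poly E UNIV (x(j := t)) = clique_poly E (insert j (UNIV - {j})) (x(j := t))"
      using U by metis
    also have "\<dots> = clique_poly E (UNIV - {j}) (x(j := t)) - (x(j := t)) j * clique_poly E N (x(j := t))"
      unfolding N_def by (rule clique_poly_insert[OF sg]) simp
    also have "clique_poly E (UNIV - {j}) (x(j := t)) = a"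
      unfolding a_def by (rule clique_poly_cong) simp
    also have "clique_poly E N (x(j := t)) = b"
      unfolding b_def N_def by (rule clique_poly_cong) simp
    finally show ?thesis by (simp only: fun_upd_same)
  qed
  have "((\<lambda>t. a - t * b) has_real_derivative (0 - 1 * b)) (at (x j))"
    by (intro derivative_intros DERIV_cmult_right DERIV_ident)
  then have "deriv (\<lambda>t. a - t * b) (x j) = - b" by (simp add: DERIV_imp_deriv)
  moreover have "(\<lambda>t. clique_poly E UNIV (x(j := t))) = (\<lambda>t. a - t * b)"
    using eq by (rule ext)
  ultimately show "deriv (\<lambda>t. clique_poly E UNIV (x(j := t))) (x j) \<noteq> 0"
    using p unfolding b_def by simp
qed

end
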